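(* Let $\Omega\subset\mathbb R^n$ be a bounded open set with $C^2$ boundary, let $x\in\partial\Omega$ with outward unit normal $\nu(x)$, and let $u:\overline\Omega\to\mathbb R$ be Lipschitz continuous and semiconcave with modulus $\omega$. Then $$-\partial^+_{-\nu}u(x)=\lambda_+(x):=\max\{\lambda_p(x):p\in D^+u(x)\},\quad\text{where }\lambda_p(x):=\max\{\lambda\in\mathbb R:p^\tau+\lambda\nu(x)\in D^+u(x)\}\ \ (p\in D^+u(x)).$$
   Context: A modulus is a nondecreasing upper semicontinuous $\omega:\mathbb R_+\to\mathbb R_+$ with $\omega(r)\to0$ as $r\to0^+$; $u$ is semiconcave with modulus $\omega$ on $\overline\Omega$ if $\lambda u(x)+(1-\lambda)u(y)-u(\lambda x+(1-\lambda)y)\le\lambda(1-\lambda)|x-y|\omega(|x-y|)$ whenever $[x,y]\subset\overline\Omega$, $\lambda\in[0,1]$. $D^+u(x)=\{p:\limsup_{y\to x,\,y\in\overline\Omega}\frac{u(y)-u(x)-\langle p,y-x\rangle}{|y-x|}\le0\}$. For $p\in\mathbb R^n$, $p^\tau=p-\langle p,\nu(x)\rangle\nu(x)$ is its tangential component. The one-sided derivative in direction $\theta$ is $\partial^+_\theta u(x)=\lim\frac{u(x+h\theta')-u(x)}{h}$ as $h\to0^+$, $\theta'\to\theta$, $x+h\theta'\in\overline\Omega$; here $\theta=-\nu(x)$. *)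

theory Defs
  imports "HOL-Analysis.Analysis"
begin

definition local_C2_defining_fn ::
    "'a::euclidean_space set \<Rightarrow> 'a \<Rightarrow> 'a set \<Rightarrow> ('a \<Rightarrow> real) \<Rightarrow> ('a \<Rightarrow> 'a) \<Rightarrow> bool" where
  "local_C2_defining_fn \<Omega> z U \<rho> g \<longleftrightarrow>
     open U \<and> z \<in> U \<and>
     (\<forall>y\<in>U. (\<rho> has_derivative (\<lambda>h. g y \<bullet> h)) (at y)) \<and>
     (\<exists>G :: 'a \<Rightarrow> ('a \<Rightarrow>\<^sub>L 'a).
        (\<forall>y\<in>U. (g has_derivative blinfun_apply (G y)) (at y)) \<and> continuous_on U G) \<and>
     (\<forall>y\<in>U. g y \<noteq> 0) \<and>
     \<Omega> \<inter> U = {y\<in>U. \<rho> y < 0}"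

definition C2_boundary :: "'a::euclidean_space set \<Rightarrow> bool" where
  "C2_boundary \<Omega> \<longleftrightarrow>
     (\<forall>z\<in>frontier \<Omega>. \<exists>U \<rho> g. local_C2_defining_fn \<Omega> z U \<rho> g)"

definition outward_unit_normal :: "'a::euclidean_space set \<Rightarrow> 'a \<Rightarrow> 'a \<Rightarrow> bool" where
  "outward_unit_normal \<Omega> x \<nu> \<longleftrightarrow>
     (\<exists>U \<rho> g. local_C2_defining_fn \<Omega> x U \<rho> g \<and> \<nu> = (1 / norm (g x)) *\<^sub>R g x)"

definition modulus :: "(real \<Rightarrow> real) \<Rightarrow> bool" where
  "modulus \<omega> \<longleftrightarrow>
     (\<forall>r\<ge>0. \<omega> r \<ge> 0) \<and>
     (\<forall>r s. 0 \<le> r \<longrightarrow> r \<le> s \<longrightarrow> \<omega> r \<le> \<omega> s) \<and>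
     (\<forall>r\<ge>0. \<forall>e>0. \<exists>d>0. \<forall>s\<ge>0. \<bar>s - r\<bar> < d \<longrightarrow> \<omega> s < \<omega> r + e) \<and>
     (\<omega> \<longlongrightarrow> 0) (at_right 0)"

definition semiconcave_with_modulus ::
    "('a::euclidean_space \<Rightarrow> real) \<Rightarrow> (real \<Rightarrow> real) \<Rightarrow> 'a set \<Rightarrow> bool" where
  "semiconcave_with_modulus u \<omega> S \<longleftrightarrow>
     (\<forall>x y l. closed_segment x y \<subseteq> S \<longrightarrow> 0 \<le> l \<longrightarrow> l \<le> 1 \<longrightarrow>
        l * u x + (1 - l) * u y - u (l *\<^sub>R x + (1 - l) *\<^sub>R y)
          \<le> l * (1 - l) * norm (x - y) * \<omega> (norm (x - y)))"

text \<open>Superdifferential relative to S: limsup_{y\<rightarrow>x, y\<in>S} of the quotient is \<le> 0 (unfolded).\<close>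
definition superdiff :: "('a::euclidean_space \<Rightarrow> real) \<Rightarrow> 'a set \<Rightarrow> 'a \<Rightarrow> 'a set" where
  "superdiff u S x = {p. \<forall>e>0. \<exists>d>0. \<forall>y\<in>S. 0 < norm (y - x) \<longrightarrow> norm (y - x) < d \<longrightarrow>
        u y - u x - p \<bullet> (y - x) \<le> e * norm (y - x)}"

definition tangential :: "'a::euclidean_space \<Rightarrow> 'a \<Rightarrow> 'a" where
  "tangential \<nu> p = p - (p \<bullet> \<nu>) *\<^sub>R \<nu>"

definition is_max :: "real set \<Rightarrow> real \<Rightarrow> bool" where
  "is_max A m \<longleftrightarrow> m \<in> A \<and> (\<forall>a\<in>A. a \<le> m)"

definition one_sided_deriv :: "('a::euclidean_space \<Rightarrow> real) \<Rightarrow> 'a set \<Rightarrow> 'a \<Rightarrow> 'a \<Rightarrow> real \<Rightarrow> bool" where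
  "one_sided_deriv u S x \<theta> L \<longleftrightarrow>
     ((\<lambda>(h, \<theta>'). (u (x + h *\<^sub>R \<theta>') - u x) / h) \<longlongrightarrow> L)
       (at (0, \<theta>) within {(h, \<theta>'). 0 < h \<and> x + h *\<^sub>R \<theta>' \<in> S})"

end

theory Submission
  imports Defs "HOL-Real_Asymp.Real_Asymp"
begin


lemma quot_limit:
  fixes f c :: "real \<Rightarrow> real"
  assumes tz: "tz > 0"
    and bnd: "\<And>s. 0 < s \<Longrightarrow> s < tz \<Longrightarrow> \<bar>f s\<bar> \<le> B"
    and mono: "\<And>s t. 0 < s \<Longrightarrow> s < t \<Longrightarrow> t < tz \<Longrightarrow> f t \<le> f s + c t"
    and c0: "(c \<longlongrightarrow> 0) (at_right 0)"
  shows "\<exists>a. (f \<longlongrightarrow> a) (at_right 0)"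
proof -
  define \<tau> where "\<tau> n = tz / (real n + 2)" for n :: nat
  have tpos: "0 < \<tau> n" "\<tau> n < tz" for n
  proof -
    have "(1::real) < real n + 2" by simp
    thus "0 < \<tau> n" "\<tau> n < tz" using tz unfolding \<tau>_def
      by (simp_all add: divide_less_eq)
  qed
  have "bounded (range (\<lambda>n. f (\<tau> n)))"
    unfolding bounded_iff by (rule exI[of _ B]) (auto intro: bnd tpos)
  then obtain a r where r: "strict_mono r" and lim: "((\<lambda>n. f (\<tau> n)) \<circ> r) \<longlonglongrightarrow> a"
    using bounded_imp_convergent_subsequence by blast
  have t0lim: "\<tau> \<longlonglongrightarrow> 0"
    unfolding \<tau>_def
    by real_asymp
  hence tr0: "(\<tau> \<circ> r) \<longlonglongrightarrow> 0"
    using r LIMSEQ_subseq_LIMSEQ by blast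
  have "\<forall>\<^sub>F s in at_right 0. dist (f s) a < e" if e: "e > 0" for e
  proof -
    obtain \<delta> where \<delta>: "\<delta> > 0" "\<And>t. 0 < t \<Longrightarrow> t < \<delta> \<Longrightarrow> \<bar>c t\<bar> < e/2"
      using c0[unfolded tendsto_iff, rule_format, of "e/2"] e
      unfolding eventually_at_right_field by (auto simp: dist_real_def)
    have "\<forall>\<^sub>F n in sequentially. \<bar>f (\<tau> (r n)) - a\<bar> < e/2"
      using lim[unfolded tendsto_iff, rule_format, of "e/2"] e by (simp add: dist_real_def o_def)
    moreover have "\<forall>\<^sub>F n in sequentially. \<tau> (r n) < \<delta>"
      using tr0[unfolded tendsto_iff, rule_format, of \<delta>] \<delta> tpos by (simp add: dist_real_def o_def abs_of_pos)
    ultimately obtain N where N: "\<bar>f (\<tau> (r N)) - a\<bar> < e/2" "\<tau> (r N) < \<delta>"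
      by (metis (mono_tags, lifting) eventually_conj_iff eventually_sequentially order.refl)
    define T where "T = \<tau> (r N)"
    have Tp: "0 < T" "T < tz" "T < \<delta>" using tpos N by (auto simp: T_def)
    have low: "f s > a - e" if "0 < s" "s < T" for s
    proof -
      have "f T \<le> f s + c T" using mono[of s T] that Tp by auto
      moreover have "\<bar>c T\<bar> < e/2" using \<delta> Tp by auto
      ultimately show ?thesis using N unfolding T_def by linarith
    qed
    have up: "f s < a + e" if s: "0 < s" "s < T" for s
    proof -
      have "\<forall>\<^sub>F n in sequentially. \<tau> (r n) < s"
        using tr0[unfolded tendsto_iff, rule_format, of s] s tpos by (simp add: dist_real_def o_def abs_of_pos)
      hence ev: "\<forall>\<^sub>F n in sequentially. f s \<le> f (\<tau> (r n)) + c s"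
        proof (rule eventually_mono)
        fix n assume "\<tau> (r n) < s"
        thus "f s \<le> f (\<tau> (r n)) + c s" using mono[of "\<tau> (r n)" s] tpos[of "r n"] s Tp by linarith
      qed
      have "((\<lambda>n. f (\<tau> (r n)) + c s) \<longlongrightarrow> a + c s) sequentially"
        using lim by (auto intro!: tendsto_intros simp: o_def)
      hence "f s \<le> a + c s"
        using ev by (rule tendsto_lowerbound) simp
      moreover have "\<bar>c s\<bar> < e/2" using \<delta> Tp s by auto
      ultimately show ?thesis by linarith
    qed
    show ?thesis
      unfolding eventually_at_right_field
      using Tp low up by (intro exI[of _ T]) (force simp: dist_real_def abs_less_iff)
  qed
  thus ?thesis unfolding tendsto_iff by blast
qed



lemma times_at_right0: "(c::real) > 0 \<Longrightarrow> filterlim (\<lambda>h. c * h) (at_right 0) (at_right 0)"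
  using filtermap_times_pos_at_right[of c 0] unfolding filterlim_def by simp

lemma om_lim:
  assumes md: "modulus \<omega>" and m: "m \<ge> 0"
  shows "((\<lambda>h. m * \<omega> (h * m)) \<longlongrightarrow> 0) (at_right 0)"
proof (cases "m = 0")
  case True thus ?thesis by simp
next
  case False
  hence mp: "m > 0" using m by simp
  have o0: "(\<omega> \<longlongrightarrow> 0) (at_right 0)" using md unfolding modulus_def by blast
  have "((\<lambda>h. \<omega> (m * h)) \<longlongrightarrow> 0) (at_right 0)"
    using filterlim_compose[OF o0 times_at_right0[OF mp]] .
  hence "((\<lambda>h. m * \<omega> (m * h)) \<longlongrightarrow> m * 0) (at_right 0)"
    by (intro tendsto_intros)
  thus ?thesis by (simp add: mult.commute)
qed

lemma modulus_nonneg: "modulus \<omega> \<Longrightarrow> r \<ge> 0 \<Longrightarrow> \<omega> r \<ge> 0"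
  unfolding modulus_def by blast

lemma modulus_mono: "modulus \<omega> \<Longrightarrow> 0 \<le> r \<Longrightarrow> r \<le> s \<Longrightarrow> \<omega> r \<le> \<omega> s"
  unfolding modulus_def by blast

locale bdry =
  fixes S :: "'a::euclidean_space set" and u :: "'a \<Rightarrow> real" and x \<nu> :: 'a
    and \<rho> :: "'a \<Rightarrow> real" and k L :: real and \<omega> :: "real \<Rightarrow> real"
  assumes xS: "x \<in> S" and nu1: "norm \<nu> = 1" and kpos: "k > 0"
    and rho0: "\<rho> x = 0"
    and rhoder: "(\<rho> has_derivative (\<lambda>h. (k *\<^sub>R \<nu>) \<bullet> h)) (at x)"
    and inS: "\<exists>r>0. \<forall>y. norm (y - x) < r \<longrightarrow> \<rho> y < 0 \<longrightarrow> y \<in> S"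
    and Srho: "\<exists>r>0. \<forall>y\<in>S. norm (y - x) < r \<longrightarrow> \<rho> y \<le> 0"
    and lip: "L-lipschitz_on S u"
    and md: "modulus \<omega>"
    and sc: "semiconcave_with_modulus u \<omega> S"
begin

definition q :: "real \<Rightarrow> 'a \<Rightarrow> real" where
  "q h w = (u (x + h *\<^sub>R w) - u x) / h"

definition d :: "'a \<Rightarrow> real" where
  "d w = Lim (at_right 0) (\<lambda>h. q h w)"

lemma Lnn: "L \<ge> 0" using lip lipschitz_on_nonneg by blast

lemma nunu: "\<nu> \<bullet> \<nu> = 1"
  using nu1 by (simp add: norm_eq_sqrt_inner)

lemma expand:
  assumes "\<epsilon> > 0"
  shows "\<exists>r>0. \<forall>v. norm v < r \<longrightarrow> \<bar>\<rho> (x + v) - k * (\<nu> \<bullet> v)\<bar> \<le> \<epsilon> * norm v"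
proof -
  obtain r where r: "r > 0" "\<And>y. norm (y - x) < r \<Longrightarrow>
      norm (\<rho> y - \<rho> x - (k *\<^sub>R \<nu>) \<bullet> (y - x)) \<le> \<epsilon> * norm (y - x)"
    using rhoder[unfolded has_derivative_at_alt] assms by blast
  show ?thesis
  proof (intro exI[of _ r] conjI allI impI)
    fix v :: 'a assume "norm v < r"
    thus "\<bar>\<rho> (x + v) - k * (\<nu> \<bullet> v)\<bar> \<le> \<epsilon> * norm v"
      using r(2)[of "x + v"] by (simp add: rho0)
  qed (use r in auto)
qed

lemma cone_in:
  assumes "\<eta> > 0"
  shows "\<exists>r>0. \<forall>v. \<nu> \<bullet> v \<le> - \<eta> * norm v \<longrightarrow> norm v < r \<longrightarrow> x + v \<in> S"
proof -
  obtain r1 where r1: "r1 > 0" "\<And>v. norm v < r1 \<Longrightarrow> \<bar>\<rho> (x + v) - k * (\<nu> \<bullet> v)\<bar> \<le> (k*\<eta>/2) * norm v"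
    using expand[of "k*\<eta>/2"] assms kpos by auto
  obtain r2 where r2: "r2 > 0" "\<And>y. norm (y - x) < r2 \<Longrightarrow> \<rho> y < 0 \<Longrightarrow> y \<in> S"
    using inS by blast
  show ?thesis
  proof (intro exI[of _ "min r1 r2"] conjI allI impI)
    fix v :: 'a assume v: "\<nu> \<bullet> v \<le> - \<eta> * norm v" "norm v < min r1 r2"
    show "x + v \<in> S"
    proof (cases "v = 0")
      case True thus ?thesis using xS by simp
    next
      case False
      hence nv: "norm v > 0" by simp
      have "k * (\<nu> \<bullet> v) \<le> k * (- \<eta> * norm v)" using v kpos by (intro mult_left_mono) auto
      moreover have "\<rho> (x + v) \<le> k * (\<nu> \<bullet> v) + (k*\<eta>/2) * norm v"
      proof -
        have "norm v < r1" using v by simp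
        hence "\<bar>\<rho> (x + v) - k * (\<nu> \<bullet> v)\<bar> \<le> (k*\<eta>/2) * norm v" by (rule r1(2))
        from abs_le_D1[OF this] show ?thesis by linarith
      qed
      moreover have "(k*\<eta>/2) * norm v > 0" using kpos assms nv by simp
      ultimately have "\<rho> (x + v) < 0" by (simp add: algebra_simps)
      thus ?thesis using r2(2)[of "x + v"] v by simp
    qed
  qed (use r1 r2 in auto)
qed

lemma cone_out:
  assumes "\<eta> > 0"
  shows "\<exists>r>0. \<forall>y\<in>S. norm (y - x) < r \<longrightarrow> \<nu> \<bullet> (y - x) \<le> \<eta> * norm (y - x)"
proof -
  obtain r1 where r1: "r1 > 0" "\<And>v. norm v < r1 \<Longrightarrow> \<bar>\<rho> (x + v) - k * (\<nu> \<bullet> v)\<bar> \<le> (k*\<eta>) * norm v"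
    using expand[of "k*\<eta>"] assms kpos by auto
  obtain r2 where r2: "r2 > 0" "\<And>y. y \<in> S \<Longrightarrow> norm (y - x) < r2 \<Longrightarrow> \<rho> y \<le> 0"
    using Srho by blast
  show ?thesis
  proof (intro exI[of _ "min r1 r2"] conjI ballI impI)
    fix y assume y: "y \<in> S" "norm (y - x) < min r1 r2"
    have "norm (y - x) < r1" using y by simp
    hence "\<bar>\<rho> (x + (y - x)) - k * (\<nu> \<bullet> (y - x))\<bar> \<le> (k*\<eta>) * norm (y - x)" by (rule r1(2))
    hence "\<rho> (x + (y - x)) - k * (\<nu> \<bullet> (y - x)) \<ge> - (k*\<eta>) * norm (y - x)"
      using abs_le_D2 by fastforce
    moreover have "\<rho> y \<le> 0" using r2(2) y by auto
    ultimately have "k * (\<nu> \<bullet> (y - x)) \<le> k * (\<eta> * norm (y - x))" by (simp add: algebra_simps)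
    thus "\<nu> \<bullet> (y - x) \<le> \<eta> * norm (y - x)" using kpos by simp
  qed (use r1 r2 in auto)
qed

lemma lipq:
  assumes "x + h *\<^sub>R w \<in> S" "x + h *\<^sub>R w' \<in> S" "h > 0"
  shows "\<bar>q h w - q h w'\<bar> \<le> L * norm (w - w')"
proof -
  have "\<bar>u (x + h *\<^sub>R w) - u (x + h *\<^sub>R w')\<bar> \<le> L * norm (h *\<^sub>R (w - w'))"
    using lipschitz_onD[OF lip assms(1,2)] by (simp add: dist_norm dist_real_def algebra_simps)
  also have "\<dots> = h * (L * norm (w - w'))" using assms(3) by simp
  finally have "\<bar>u (x + h *\<^sub>R w) - u (x + h *\<^sub>R w')\<bar> / h \<le> L * norm (w - w')"
    using assms(3) by (simp add: divide_le_eq mult.commute)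
  moreover have "q h w - q h w' = (u (x + h *\<^sub>R w) - u (x + h *\<^sub>R w')) / h"
    unfolding q_def by (simp add: diff_divide_distrib)
  ultimately show ?thesis using assms(3) by simp
qed

lemma q0: "q h 0 = 0" by (simp add: q_def)

lemma qbound:
  assumes "x + h *\<^sub>R w \<in> S" "h > 0"
  shows "\<bar>q h w\<bar> \<le> L * norm w"
  using lipq[OF assms(1) _ assms(2), of 0] xS by (simp add: q0)


lemma cone_scale:
  assumes "\<nu> \<bullet> w \<le> - \<eta> * norm w" "c \<ge> 0"
  shows "\<nu> \<bullet> (c *\<^sub>R w) \<le> - \<eta> * norm (c *\<^sub>R w)"
proof -
  have "c * (\<nu> \<bullet> w) \<le> c * (- \<eta> * norm w)" using assms by (intro mult_left_mono) auto
  thus ?thesis using assms(2) by (simp add: abs_of_nonneg algebra_simps)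
qed

lemma H_cone:
  assumes "\<nu> \<bullet> w < 0"
  shows "w \<noteq> 0" "- (\<nu> \<bullet> w) / norm w > 0" "\<nu> \<bullet> w \<le> - (- (\<nu> \<bullet> w) / norm w) * norm w"
proof -
  show w0: "w \<noteq> 0" using assms by auto
  hence "norm w > 0" by simp
  thus "- (\<nu> \<bullet> w) / norm w > 0" using assms by (intro divide_pos_pos) auto
  show "\<nu> \<bullet> w \<le> - (- (\<nu> \<bullet> w) / norm w) * norm w" using w0 by simp
qed

lemma mono_q:
  assumes cone: "\<forall>v. \<nu> \<bullet> v \<le> - \<eta> * norm v \<longrightarrow> norm v < r \<longrightarrow> x + v \<in> S"
    and w: "\<nu> \<bullet> w \<le> - \<eta> * norm w" and st: "0 < s" "s < t" "t * norm w < r"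
  shows "q t w \<le> q s w + norm w * \<omega> (t * norm w)"
proof -
  have seg: "closed_segment (x + t *\<^sub>R w) x \<subseteq> S"
  proof
    fix z assume "z \<in> closed_segment (x + t *\<^sub>R w) x"
    then obtain \<mu> where mu: "0 \<le> \<mu>" "\<mu> \<le> 1" and z: "z = (1 - \<mu>) *\<^sub>R (x + t *\<^sub>R w) + \<mu> *\<^sub>R x"
      unfolding closed_segment_def by blast
    have z': "z = x + ((1 - \<mu>) * t) *\<^sub>R w" unfolding z by (simp add: algebra_simps)
    have c0: "(1 - \<mu>) * t \<ge> 0" using mu st by simp
    have "norm (((1 - \<mu>) * t) *\<^sub>R w) \<le> t * norm w"
      using mu st c0 by (simp add: abs_of_nonneg mult_right_le_one_le mult_left_le_one_le mult_right_mono)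
    hence "norm (((1 - \<mu>) * t) *\<^sub>R w) < r" using st by simp
    thus "z \<in> S" using cone cone_scale[OF w c0] z' by blast
  qed
  define l where "l = s / t"
  have l01: "0 \<le> l" "l \<le> 1" using st by (auto simp: l_def)
  have ineq0: "l * u (x + t *\<^sub>R w) + (1 - l) * u x - u (l *\<^sub>R (x + t *\<^sub>R w) + (1 - l) *\<^sub>R x)
          \<le> l * (1 - l) * norm (x + t *\<^sub>R w - x) * \<omega> (norm (x + t *\<^sub>R w - x))"
    using sc seg l01 unfolding semiconcave_with_modulus_def by blast
  have eq1: "l *\<^sub>R (x + t *\<^sub>R w) + (1 - l) *\<^sub>R x = x + s *\<^sub>R w"
    using st by (simp add: l_def algebra_simps)
  have eq2: "norm (x + t *\<^sub>R w - x) = t * norm w" using st by simp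
  have ineq: "l * u (x + t *\<^sub>R w) + (1 - l) * u x - u (x + s *\<^sub>R w)
          \<le> l * (1 - l) * (t * norm w) * \<omega> (t * norm w)" using ineq0 unfolding eq1 eq2 .
  have om: "\<omega> (t * norm w) \<ge> 0" using modulus_nonneg[OF md] st by simp
  have "l * (1 - l) * (t * norm w) * \<omega> (t * norm w) = s * ((1 - l) * (norm w * \<omega> (t * norm w)))"
    using st by (simp add: l_def)
  also have "\<dots> \<le> s * (norm w * \<omega> (t * norm w))"
    using st l01 om by (intro mult_left_mono) (auto simp: mult_left_le_one_le)
  finally have r1: "l * (1 - l) * (t * norm w) * \<omega> (t * norm w) \<le> s * (norm w * \<omega> (t * norm w))" .
  have "l * u (x + t *\<^sub>R w) + (1 - l) * u x - u (x + s *\<^sub>R w) = s * (q t w - q s w)"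
    using st by (simp add: l_def q_def field_simps)
  hence "s * (q t w - q s w) \<le> s * (norm w * \<omega> (t * norm w))" using ineq r1 by linarith
  hence "q t w - q s w \<le> norm w * \<omega> (t * norm w)" using st by simp
  thus ?thesis by simp
qed

lemma dlim:
  assumes "\<nu> \<bullet> w < 0"
  shows "((\<lambda>h. q h w) \<longlongrightarrow> d w) (at_right 0)"
proof -
  define \<eta> where "\<eta> = - (\<nu> \<bullet> w) / norm w"
  have w0: "w \<noteq> 0" and eta: "\<eta> > 0" and wc: "\<nu> \<bullet> w \<le> - \<eta> * norm w"
    using H_cone[OF assms] unfolding \<eta>_def by auto
  obtain r where r: "r > 0" and cone: "\<forall>v. \<nu> \<bullet> v \<le> - \<eta> * norm v \<longrightarrow> norm v < r \<longrightarrow> x + v \<in> S"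
    using cone_in[OF eta] by blast
  have nw: "norm w > 0" using w0 by simp
  have "\<exists>a. ((\<lambda>h. q h w) \<longlongrightarrow> a) (at_right 0)"
  proof (rule quot_limit[where tz = "r / norm w" and B = "L * norm w" and c = "\<lambda>t. norm w * \<omega> (t * norm w)"])
    show "r / norm w > 0" using r nw by simp
  next
    fix s assume s: "0 < s" "s < r / norm w"
    have "s * norm w < r" using s nw by (simp add: pos_less_divide_eq)
    hence "x + s *\<^sub>R w \<in> S" using cone cone_scale[OF wc, of s] s by auto
    thus "\<bar>q s w\<bar> \<le> L * norm w" using qbound s by blast
  next
    fix s t assume st: "0 < s" "s < t" "t < r / norm w"
    have "t * norm w < r" using st nw by (simp add: pos_less_divide_eq)
    thus "q t w \<le> q s w + norm w * \<omega> (t * norm w)" using mono_q[OF cone wc] st by blast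
  next
    show "((\<lambda>t. norm w * \<omega> (t * norm w)) \<longlongrightarrow> 0) (at_right 0)"
      using om_lim[OF md, of "norm w"] by simp
  qed
  then obtain a where a: "((\<lambda>h. q h w) \<longlongrightarrow> a) (at_right 0)" by blast
  hence "d w = a" unfolding d_def by (intro tendsto_Lim) auto
  thus ?thesis using a by simp
qed

lemma dupper:
  assumes cone: "\<forall>v. \<nu> \<bullet> v \<le> - \<eta> * norm v \<longrightarrow> norm v < r \<longrightarrow> x + v \<in> S"
    and w: "\<nu> \<bullet> w \<le> - \<eta> * norm w" "\<nu> \<bullet> w < 0" and t: "0 < t" "t * norm w < r"
  shows "q t w \<le> d w + norm w * \<omega> (t * norm w)"
proof -
  have "\<forall>\<^sub>F s in at_right 0. q t w - norm w * \<omega> (t * norm w) \<le> q s w"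
    unfolding eventually_at_right_field
    using mono_q[OF cone w(1) _ _ t(2)] t by (intro exI[of _ t]) force
  hence "q t w - norm w * \<omega> (t * norm w) \<le> d w"
    using tendsto_lowerbound[OF dlim[OF w(2)]] by simp
  thus ?thesis by simp
qed

lemma dsup:
  assumes p: "p \<in> superdiff u S x" and w: "\<nu> \<bullet> w < 0"
  shows "d w \<le> p \<bullet> w"
proof (rule ccontr)
  assume "\<not> d w \<le> p \<bullet> w"
  hence gap: "d w - p \<bullet> w > 0" by simp
  define \<eta> where "\<eta> = - (\<nu> \<bullet> w) / norm w"
  have w0: "w \<noteq> 0" and eta: "\<eta> > 0" and wc: "\<nu> \<bullet> w \<le> - \<eta> * norm w"
    using H_cone[OF w] unfolding \<eta>_def by auto
  have nw: "norm w > 0" using w0 by simp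
  obtain r where r: "r > 0" and cone: "\<forall>v. \<nu> \<bullet> v \<le> - \<eta> * norm v \<longrightarrow> norm v < r \<longrightarrow> x + v \<in> S"
    using cone_in[OF eta] by blast
  define e where "e = (d w - p \<bullet> w) / (2 * norm w)"
  have e: "e > 0" using gap nw by (simp add: e_def)
  obtain \<delta> where \<delta>: "\<delta> > 0" "\<And>y. y \<in> S \<Longrightarrow> 0 < norm (y - x) \<Longrightarrow> norm (y - x) < \<delta> \<Longrightarrow>
        u y - u x - p \<bullet> (y - x) \<le> e * norm (y - x)"
    using p e unfolding superdiff_def by blast
  have "\<forall>\<^sub>F h in at_right 0. q h w \<le> p \<bullet> w + e * norm w"
    unfolding eventually_at_right_field
  proof (intro exI[of _ "min (\<delta> / norm w) (r / norm w)"] conjI allI impI)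
    show "0 < min (\<delta> / norm w) (r / norm w)" using \<delta> r nw by simp
  next
    fix h :: real assume h: "0 < h" "h < min (\<delta> / norm w) (r / norm w)"
    have h1: "h * norm w < \<delta>" "h * norm w < r" using h nw by (auto simp: pos_less_divide_eq)
    have inS: "x + h *\<^sub>R w \<in> S" using cone cone_scale[OF wc, of h] h h1 by auto
    have "u (x + h *\<^sub>R w) - u x - p \<bullet> (h *\<^sub>R w) \<le> e * norm (h *\<^sub>R w)"
      using \<delta>(2)[OF inS] h h1 nw by simp
    hence "u (x + h *\<^sub>R w) - u x \<le> (p \<bullet> w + e * norm w) * h"
      using h by (simp add: algebra_simps)
    thus "q h w \<le> p \<bullet> w + e * norm w"
      unfolding q_def using h by (simp add: pos_divide_le_eq)
  qed
  hence "d w \<le> p \<bullet> w + e * norm w"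
    using tendsto_upperbound[OF dlim[OF w]] by simp
  moreover have "e * norm w = (d w - p \<bullet> w) / 2" using nw by (simp add: e_def)
  ultimately show False using gap by (simp add: field_simps)
qed

end


context bdry begin

lemma cone_convex:
  assumes "\<nu> \<bullet> v1 \<le> - \<eta> * norm v1" "\<nu> \<bullet> v2 \<le> - \<eta> * norm v2" "\<eta> \<ge> 0"
    "0 \<le> \<alpha>" "0 \<le> \<beta>"
  shows "\<nu> \<bullet> (\<alpha> *\<^sub>R v1 + \<beta> *\<^sub>R v2) \<le> - \<eta> * norm (\<alpha> *\<^sub>R v1 + \<beta> *\<^sub>R v2)"
proof -
  have "\<nu> \<bullet> (\<alpha> *\<^sub>R v1 + \<beta> *\<^sub>R v2) = \<alpha> * (\<nu> \<bullet> v1) + \<beta> * (\<nu> \<bullet> v2)"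
    by (simp add: inner_add_right)
  also have "\<dots> \<le> \<alpha> * (- \<eta> * norm v1) + \<beta> * (- \<eta> * norm v2)"
    using assms by (intro add_mono mult_left_mono) auto
  also have "\<dots> = - \<eta> * (norm (\<alpha> *\<^sub>R v1) + norm (\<beta> *\<^sub>R v2))"
    using assms by (simp add: algebra_simps)
  also have "\<dots> \<le> - \<eta> * norm (\<alpha> *\<^sub>R v1 + \<beta> *\<^sub>R v2)"
    using assms norm_triangle_ineq[of "\<alpha> *\<^sub>R v1" "\<beta> *\<^sub>R v2"] by (intro mult_left_mono_neg) auto
  finally show ?thesis .
qed

lemma dconc:
  assumes a: "\<nu> \<bullet> a < 0" and b: "\<nu> \<bullet> b < 0" and l: "0 \<le> l" "l \<le> 1"
  shows "l * d a + (1 - l) * d b \<le> d (l *\<^sub>R a + (1 - l) *\<^sub>R b)"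
proof -
  define c where "c = l *\<^sub>R a + (1 - l) *\<^sub>R b"
  have c: "\<nu> \<bullet> c < 0"
  proof (cases "l = 0")
    case True thus ?thesis using b by (simp add: c_def)
  next
    case False
    hence "l > 0" using l by simp
    hence "l * (\<nu> \<bullet> a) < 0" using a by (simp add: mult_pos_neg)
    moreover have "(1 - l) * (\<nu> \<bullet> b) \<le> 0" using l b by (simp add: mult_nonneg_nonpos)
    ultimately show ?thesis by (simp add: c_def inner_add_right)
  qed
  define \<eta> where "\<eta> = min (- (\<nu> \<bullet> a) / norm a) (- (\<nu> \<bullet> b) / norm b)"
  have eta: "\<eta> > 0" using H_cone(2)[OF a] H_cone(2)[OF b] by (simp add: \<eta>_def)
  have ac: "\<nu> \<bullet> a \<le> - \<eta> * norm a"
  proof -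
    have "\<eta> * norm a \<le> (- (\<nu> \<bullet> a) / norm a) * norm a" by (intro mult_right_mono) (auto simp: \<eta>_def)
    thus ?thesis using H_cone(1)[OF a] by simp
  qed
  have bc: "\<nu> \<bullet> b \<le> - \<eta> * norm b"
  proof -
    have "\<eta> * norm b \<le> (- (\<nu> \<bullet> b) / norm b) * norm b" by (intro mult_right_mono) (auto simp: \<eta>_def)
    thus ?thesis using H_cone(1)[OF b] by simp
  qed
  obtain r where r: "r > 0" and cone: "\<forall>v. \<nu> \<bullet> v \<le> - \<eta> * norm v \<longrightarrow> norm v < r \<longrightarrow> x + v \<in> S"
    using cone_in[OF eta] by blast
  define M where "M = max (norm a) (norm b) + 1"
  have M: "norm a < M" "norm b < M" by (auto simp: M_def)
  hence M: "M > 0" "norm a < M" "norm b < M" using norm_ge_zero[of a] by linarith+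
  have ev: "\<forall>\<^sub>F h in at_right 0. norm (a - b) * \<omega> (h * norm (a - b))
              \<ge> l * q h a + (1 - l) * q h b - q h c"
    unfolding eventually_at_right_field
  proof (intro exI[of _ "r / M"] conjI allI impI)
    show "0 < r / M" using r M by simp
  next
    fix h :: real assume h: "0 < h" "h < r / M"
    have hM: "h * M < r" using h M by (simp add: pos_less_divide_eq)
    have seg: "closed_segment (x + h *\<^sub>R a) (x + h *\<^sub>R b) \<subseteq> S"
    proof
      fix z assume "z \<in> closed_segment (x + h *\<^sub>R a) (x + h *\<^sub>R b)"
      then obtain \<mu> where mu: "0 \<le> \<mu>" "\<mu> \<le> 1"
        and z: "z = (1 - \<mu>) *\<^sub>R (x + h *\<^sub>R a) + \<mu> *\<^sub>R (x + h *\<^sub>R b)"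
        unfolding closed_segment_def by blast
      define v where "v = (1 - \<mu>) *\<^sub>R (h *\<^sub>R a) + \<mu> *\<^sub>R (h *\<^sub>R b)"
      have z': "z = x + v" unfolding z v_def by (simp add: algebra_simps)
      have vc: "\<nu> \<bullet> v \<le> - \<eta> * norm v" unfolding v_def
        using cone_scale[OF ac, of h] cone_scale[OF bc, of h] h eta mu
        by (intro cone_convex) auto
      have "norm v \<le> (1 - \<mu>) * norm (h *\<^sub>R a) + \<mu> * norm (h *\<^sub>R b)"
        unfolding v_def using mu h norm_triangle_ineq[of "(1 - \<mu>) *\<^sub>R (h *\<^sub>R a)" "\<mu> *\<^sub>R (h *\<^sub>R b)"]
        by (simp add: abs_mult)
      also have "\<dots> \<le> (1 - \<mu>) * (h * M) + \<mu> * (h * M)"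
        using mu h M by (intro add_mono mult_left_mono) auto
      also have "\<dots> = h * M" by (simp add: algebra_simps)
      finally have "norm v < r" using hM by simp
      thus "z \<in> S" using cone vc z' by blast
    qed
    have ineq0: "l * u (x + h *\<^sub>R a) + (1 - l) * u (x + h *\<^sub>R b)
          - u (l *\<^sub>R (x + h *\<^sub>R a) + (1 - l) *\<^sub>R (x + h *\<^sub>R b))
          \<le> l * (1 - l) * norm ((x + h *\<^sub>R a) - (x + h *\<^sub>R b))
               * \<omega> (norm ((x + h *\<^sub>R a) - (x + h *\<^sub>R b)))"
      using sc seg l unfolding semiconcave_with_modulus_def by blast
    have eq1: "l *\<^sub>R (x + h *\<^sub>R a) + (1 - l) *\<^sub>R (x + h *\<^sub>R b) = x + h *\<^sub>R c"
      by (simp add: c_def algebra_simps)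
    have eq2: "norm ((x + h *\<^sub>R a) - (x + h *\<^sub>R b)) = h * norm (a - b)"
    proof -
      have "(x + h *\<^sub>R a) - (x + h *\<^sub>R b) = h *\<^sub>R (a - b)" by (simp add: algebra_simps)
      thus ?thesis using h by simp
    qed
    have ineq: "l * u (x + h *\<^sub>R a) + (1 - l) * u (x + h *\<^sub>R b) - u (x + h *\<^sub>R c)
          \<le> l * (1 - l) * (h * norm (a - b)) * \<omega> (h * norm (a - b))"
      using ineq0 unfolding eq1 eq2 .
    have om: "\<omega> (h * norm (a - b)) \<ge> 0" using modulus_nonneg[OF md] h by simp
    have ll: "l * (1 - l) \<le> 1" using l by (simp add: mult_le_one)
    have "l * (1 - l) * (h * norm (a - b)) * \<omega> (h * norm (a - b))
          = (l * (1 - l)) * (h * norm (a - b) * \<omega> (h * norm (a - b)))" by simp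
    also have "\<dots> \<le> 1 * (h * norm (a - b) * \<omega> (h * norm (a - b)))"
      using ll om h by (intro mult_right_mono) auto
    finally have r1: "l * (1 - l) * (h * norm (a - b)) * \<omega> (h * norm (a - b))
          \<le> h * (norm (a - b) * \<omega> (h * norm (a - b)))" by simp
    have "l * u (x + h *\<^sub>R a) + (1 - l) * u (x + h *\<^sub>R b) - u (x + h *\<^sub>R c)
          = h * (l * q h a + (1 - l) * q h b - q h c)"
      using h by (simp add: q_def field_simps)
    hence "h * (l * q h a + (1 - l) * q h b - q h c) \<le> h * (norm (a - b) * \<omega> (h * norm (a - b)))"
      using ineq r1 by linarith
    thus "l * q h a + (1 - l) * q h b - q h c \<le> norm (a - b) * \<omega> (h * norm (a - b))"
      using h by simp
  qed
  have lim1: "((\<lambda>h. l * q h a + (1 - l) * q h b - q h c) \<longlongrightarrow> l * d a + (1 - l) * d b - d c) (at_right 0)"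
    by (intro tendsto_intros dlim a b c)
  have "l * d a + (1 - l) * d b - d c \<le> 0"
    using tendsto_le[OF _ om_lim[OF md, of "norm (a - b)"] lim1 ev] by simp
  thus ?thesis by (simp add: c_def)
qed

lemma dhom:
  assumes w: "\<nu> \<bullet> w < 0" and s: "s > 0"
  shows "d (s *\<^sub>R w) = s * d w"
proof -
  have sw: "\<nu> \<bullet> (s *\<^sub>R w) < 0" using w s by (simp add: mult_pos_neg)
  have eq: "(\<lambda>h. q h (s *\<^sub>R w)) = (\<lambda>h. s * q (s * h) w)"
  proof
    fix h :: real
    show "q h (s *\<^sub>R w) = s * q (s * h) w"
      using s by (cases "h = 0") (auto simp: q_def field_simps)
  qed
  have "((\<lambda>h. q (s * h) w) \<longlongrightarrow> d w) (at_right 0)"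
    using filterlim_compose[OF dlim[OF w] times_at_right0[OF s]] .
  hence "((\<lambda>h. s * q (s * h) w) \<longlongrightarrow> s * d w) (at_right 0)"
    by (intro tendsto_intros)
  hence "((\<lambda>h. q h (s *\<^sub>R w)) \<longlongrightarrow> s * d w) (at_right 0)" unfolding eq .
  from tendsto_unique[OF _ dlim[OF sw] this] show ?thesis by simp
qed

end


context bdry begin

lemma supgrad: "\<exists>p. (\<forall>w. \<nu> \<bullet> w < 0 \<longrightarrow> d w \<le> p \<bullet> w) \<and> d (- \<nu>) = p \<bullet> (- \<nu>)"
proof -
  have nn: "\<nu> \<bullet> (- \<nu>) < 0" using nunu by simp
  define A where "A = {z :: 'a \<times> real. \<nu> \<bullet> fst z < 0 \<and> snd z < d (fst z)}"
  have convA: "convex A"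
    unfolding convex_def
  proof (intro ballI allI impI)
    fix z1 z2 :: "'a \<times> real" and \<alpha> \<beta> :: real
    assume z: "z1 \<in> A" "z2 \<in> A" and ab: "0 \<le> \<alpha>" "0 \<le> \<beta>" "\<alpha> + \<beta> = 1"
    obtain w1 t1 where z1: "z1 = (w1, t1)" by (cases z1)
    obtain w2 t2 where z2: "z2 = (w2, t2)" by (cases z2)
    have h1: "\<nu> \<bullet> w1 < 0" "t1 < d w1" using z z1 by (auto simp: A_def)
    have h2: "\<nu> \<bullet> w2 < 0" "t2 < d w2" using z z2 by (auto simp: A_def)
    have b: "\<beta> = 1 - \<alpha>" using ab by simp
    have "\<nu> \<bullet> (\<alpha> *\<^sub>R w1 + \<beta> *\<^sub>R w2) < 0"
    proof (cases "\<alpha> = 0")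
      case True thus ?thesis using h2 ab by simp
    next
      case False
      hence "\<alpha> * (\<nu> \<bullet> w1) < 0" using ab h1 by (simp add: mult_pos_neg)
      moreover have "\<beta> * (\<nu> \<bullet> w2) \<le> 0" using ab h2 by (simp add: mult_nonneg_nonpos)
      ultimately show ?thesis by (simp add: inner_add_right)
    qed
    moreover have "\<alpha> * t1 + \<beta> * t2 < \<alpha> * d w1 + \<beta> * d w2"
    proof (cases "\<alpha> = 0")
      case True thus ?thesis using h2 ab by simp
    next
      case False
      hence "\<alpha> * t1 < \<alpha> * d w1" using ab h1 by simp
      moreover have "\<beta> * t2 \<le> \<beta> * d w2" using ab h2 by (intro mult_left_mono) auto
      ultimately show ?thesis by simp
    qed
    moreover have "\<alpha> * d w1 + \<beta> * d w2 \<le> d (\<alpha> *\<^sub>R w1 + \<beta> *\<^sub>R w2)"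
      using dconc[OF h1(1) h2(1), of \<alpha>] ab b by simp
    ultimately show "\<alpha> *\<^sub>R z1 + \<beta> *\<^sub>R z2 \<in> A" unfolding A_def z1 z2 by simp
  qed
  have "(- \<nu>, d (- \<nu>) - 1) \<in> A" using nn by (simp add: A_def)
  hence Ane: "A \<noteq> {}" by blast
  have disj: "A \<inter> {(- \<nu>, d (- \<nu>))} = {}" by (auto simp: A_def)
  obtain ab b where ab: "ab \<noteq> 0" and sepA: "\<forall>z\<in>A. ab \<bullet> z \<le> b"
      and sepB: "\<forall>z\<in>{(- \<nu>, d (- \<nu>))}. ab \<bullet> z \<ge> b"
    using separating_hyperplane_sets[OF convA convex_singleton Ane _ disj] by blast
  obtain \<alpha> \<beta> where abd: "ab = (\<alpha>, \<beta>)" by (cases ab)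
  have sep: "\<alpha> \<bullet> w + \<beta> * t \<le> b" if "\<nu> \<bullet> w < 0" "t < d w" for w t
    using sepA that unfolding A_def abd by auto
  have B: "\<alpha> \<bullet> (- \<nu>) + \<beta> * d (- \<nu>) \<ge> b" using sepB unfolding abd by simp
  have beta0: "\<beta> \<ge> 0"
  proof (rule ccontr)
    assume "\<not> \<beta> \<ge> 0"
    hence bn: "\<beta> < 0" by simp
    define t where "t = min (d (- \<nu>) - 1) ((b - \<alpha> \<bullet> (- \<nu>)) / \<beta> - 1)"
    have "t < (b - \<alpha> \<bullet> (- \<nu>)) / \<beta>" by (simp add: t_def)
    hence "\<beta> * t > b - \<alpha> \<bullet> (- \<nu>)" using bn by (simp add: pos_less_divide_eq neg_less_divide_eq mult.commute)
    moreover have "\<alpha> \<bullet> (- \<nu>) + \<beta> * t \<le> b" using sep[OF nn, of t] by (simp add: t_def)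
    ultimately show False by simp
  qed
  define P where "P w = \<alpha> \<bullet> w + \<beta> * d w" for w
  have Pb: "P w \<le> b" if w: "\<nu> \<bullet> w < 0" for w
  proof (rule ccontr)
    assume "\<not> P w \<le> b"
    hence g: "P w - b > 0" by simp
    define e where "e = (P w - b) / (2 * (\<beta> + 1))"
    have e: "e > 0" using g beta0 by (simp add: e_def)
    have "\<alpha> \<bullet> w + \<beta> * (d w - e) \<le> b" using sep[OF w, of "d w - e"] e by simp
    moreover have "\<beta> * e < P w - b"
    proof -
      have "\<beta> * e = (P w - b) * (\<beta> / (2 * (\<beta> + 1)))" by (simp add: e_def)
      also have "\<dots> < (P w - b) * 1" using g beta0 by (intro mult_strict_left_mono) auto
      finally show ?thesis by simp
    qed
    ultimately show False by (simp add: P_def algebra_simps)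
  qed
  have Phom: "P (s *\<^sub>R w) = s * P w" if "\<nu> \<bullet> w < 0" "s > 0" for s w
    using dhom[OF that] by (simp add: P_def algebra_simps)
  have Ple0: "P w \<le> 0" if w: "\<nu> \<bullet> w < 0" for w
  proof (rule ccontr)
    assume "\<not> P w \<le> 0"
    hence Pp: "P w > 0" by simp
    define s where "s = (\<bar>b\<bar> + 1) / P w"
    have s: "s > 0" using Pp by (simp add: s_def)
    have sw: "\<nu> \<bullet> (s *\<^sub>R w) < 0" using w s by (simp add: mult_pos_neg)
    have "P (s *\<^sub>R w) = \<bar>b\<bar> + 1" using Phom[OF w s] Pp by (simp add: s_def)
    thus False using Pb[OF sw] by simp
  qed
  have half: "\<nu> \<bullet> ((1/2) *\<^sub>R (- \<nu>)) < 0" using nunu by simp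
  have "P ((1/2) *\<^sub>R (- \<nu>)) = (1/2) * P (- \<nu>)" using Phom[OF nn, of "1/2"] by simp
  hence "(1/2) * P (- \<nu>) \<le> b" using Pb[OF half] by simp
  moreover have "P (- \<nu>) \<ge> b" using B by (simp add: P_def)
  ultimately have b0: "b \<ge> 0" by simp
  have Pnu: "P (- \<nu>) = 0" using Ple0[OF nn] b0 \<open>P (- \<nu>) \<ge> b\<close> by simp
  have betap: "\<beta> > 0"
  proof (rule ccontr)
    assume "\<not> \<beta> > 0"
    hence b00: "\<beta> = 0" using beta0 by simp
    hence a0: "\<alpha> \<noteq> 0" using ab abd by (auto simp: zero_prod_def)
    have an: "\<alpha> \<bullet> (- \<nu>) = 0" using Pnu b00 by (simp add: P_def)
    define s where "s = 1 / (2 * (\<bar>\<nu> \<bullet> \<alpha>\<bar> + 1))"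
    have s: "s > 0" by (simp add: s_def add_pos_nonneg)
    have "s * \<bar>\<nu> \<bullet> \<alpha>\<bar> \<le> 1/2"
      by (simp add: s_def field_simps)
    hence "s * (\<nu> \<bullet> \<alpha>) \<le> 1/2" using s
      by (metis abs_ge_self dual_order.trans mult_left_mono order_less_imp_le)
    moreover have "\<nu> \<bullet> (- \<nu> + s *\<^sub>R \<alpha>) = s * (\<nu> \<bullet> \<alpha>) - 1" using nunu by (simp add: inner_add_right inner_diff_right)
    ultimately have w: "\<nu> \<bullet> (- \<nu> + s *\<^sub>R \<alpha>) < 0" by simp
    have "P (- \<nu> + s *\<^sub>R \<alpha>) = s * (\<alpha> \<bullet> \<alpha>)" using an b00
      by (simp add: P_def inner_add_right inner_diff_right)
    moreover have "\<alpha> \<bullet> \<alpha> > 0" using a0 by simp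
    ultimately have "P (- \<nu> + s *\<^sub>R \<alpha>) > 0" using s by simp
    thus False using Ple0[OF w] by simp
  qed
  define p where "p = (- 1 / \<beta>) *\<^sub>R \<alpha>"
  show ?thesis
  proof (intro exI[of _ p] conjI allI impI)
    fix w assume w: "\<nu> \<bullet> w < 0"
    have "\<alpha> \<bullet> w + \<beta> * d w \<le> 0" using Ple0[OF w] by (simp add: P_def)
    thus "d w \<le> p \<bullet> w" using betap
      by (simp add: p_def field_simps)
  next
    have "\<alpha> \<bullet> (- \<nu>) + \<beta> * d (- \<nu>) = 0" using Pnu by (simp add: P_def)
    thus "d (- \<nu>) = p \<bullet> (- \<nu>)" using betap
      by (simp add: p_def field_simps)
  qed
qed

end


context bdry begin

lemma psuper:
  assumes pd: "\<forall>w. \<nu> \<bullet> w < 0 \<longrightarrow> d w \<le> p \<bullet> w"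
  shows "p \<in> superdiff u S x"
  unfolding superdiff_def
proof (intro CollectI allI impI)
  fix e :: real assume e: "e > 0"
  define M where "M = norm p + L + 1"
  have M: "M > 0" using Lnn norm_ge_zero[of p] unfolding M_def by linarith
  define \<delta>0 where "\<delta>0 = min (1/2) (e / (2 * M))"
  have d01: "\<delta>0 > 0" "\<delta>0 \<le> 1/2" using e M by (auto simp: \<delta>0_def)
  have "\<delta>0 \<le> e / (2 * M)" by (simp add: \<delta>0_def)
  hence "\<delta>0 * M \<le> e / (2 * M) * M" using M by (intro mult_right_mono) auto
  hence "\<delta>0 * M \<le> e / 2" using M by simp
  note d0 = d01 this
  have d0M: "\<delta>0 * (L + norm p) \<le> e / 2"
  proof -
    have "\<delta>0 * (L + norm p) \<le> \<delta>0 * M" using d0 by (intro mult_left_mono) (auto simp: M_def)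
    thus ?thesis using d0 by linarith
  qed
  obtain r' where r': "r' > 0" and cone: "\<forall>v. \<nu> \<bullet> v \<le> - (\<delta>0/4) * norm v \<longrightarrow> norm v < r' \<longrightarrow> x + v \<in> S"
    using cone_in[of "\<delta>0/4"] d0 by auto
  obtain r3 where r3: "r3 > 0" "\<And>y. y \<in> S \<Longrightarrow> norm (y - x) < r3 \<Longrightarrow> \<nu> \<bullet> (y - x) \<le> (\<delta>0/2) * norm (y - x)"
    using cone_out[of "\<delta>0/2"] d0 by auto
  have o0: "(\<omega> \<longlongrightarrow> 0) (at_right 0)" using md unfolding modulus_def by blast
  obtain bb where bb: "bb > 0" "\<And>t. 0 < t \<Longrightarrow> t < bb \<Longrightarrow> \<bar>\<omega> t\<bar> < e/4"
    using o0[unfolded tendsto_iff, rule_format, of "e/4"] e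
    unfolding eventually_at_right_field by (auto simp: dist_real_def)
  show "\<exists>dd>0. \<forall>y\<in>S. 0 < norm (y - x) \<longrightarrow> norm (y - x) < dd \<longrightarrow>
          u y - u x - p \<bullet> (y - x) \<le> e * norm (y - x)"
  proof (intro exI[of _ "min r3 (min (r'/2) (bb/2))"] conjI ballI impI)
    show "0 < min r3 (min (r'/2) (bb/2))" using r3 r' bb by simp
  next
    fix y assume y: "y \<in> S" "0 < norm (y - x)" "norm (y - x) < min r3 (min (r'/2) (bb/2))"
    define h where "h = norm (y - x)"
    define w where "w = (1/h) *\<^sub>R (y - x)"
    have h: "h > 0" "h < r3" "h < r'/2" "h < bb/2" using y by (auto simp: h_def)
    have yw: "y = x + h *\<^sub>R w" using h by (simp add: w_def)
    have nw: "norm w = 1" using h by (simp add: w_def h_def)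
    have "\<nu> \<bullet> (y - x) \<le> (\<delta>0/2) * h" using r3(2)[OF y(1)] h by (simp add: h_def)
    moreover have "\<nu> \<bullet> w = (\<nu> \<bullet> (y - x)) / h" unfolding w_def inner_scaleR_right by simp
    ultimately have nuw: "\<nu> \<bullet> w \<le> \<delta>0/2" using h by (simp add: pos_divide_le_eq)
    define w' where "w' = w - \<delta>0 *\<^sub>R \<nu>"
    have nuw': "\<nu> \<bullet> w' \<le> - \<delta>0/2" using nuw nunu by (simp add: w'_def inner_diff_right)
    have nw': "norm w' \<le> 3/2"
    proof -
      have "norm w' \<le> norm w + norm (\<delta>0 *\<^sub>R \<nu>)" unfolding w'_def by (rule norm_triangle_ineq4)
      thus ?thesis using nw nu1 d0 by simp
    qed
    have cw': "\<nu> \<bullet> w' \<le> - (\<delta>0/4) * norm w'"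
    proof -
      have "(\<delta>0/4) * norm w' \<le> (\<delta>0/4) * (3/2)" using nw' d0 by (intro mult_left_mono) auto
      thus ?thesis using nuw' d0 by linarith
    qed
    have Hw': "\<nu> \<bullet> w' < 0" using nuw' d0 by simp
    have hw': "h * norm w' < r'"
    proof -
      have "h * norm w' \<le> h * (3/2)" using nw' h by (intro mult_left_mono) auto
      thus ?thesis using h by linarith
    qed
    have inS': "x + h *\<^sub>R w' \<in> S" using cone cone_scale[OF cw', of h] h hw' by simp
    have up: "q h w' \<le> d w' + norm w' * \<omega> (h * norm w')"
      using dupper[OF cone cw' Hw' h(1) hw'] .
    have om1: "\<omega> (h * norm w') \<le> \<omega> (2 * h)"
      using modulus_mono[OF md, of "h * norm w'" "2 * h"] h nw'
      by (simp add: mult_left_mono)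
    have om0: "\<omega> (h * norm w') \<ge> 0" using modulus_nonneg[OF md] h by simp
    have om2: "\<omega> (2 * h) < e/4" using bb(2)[of "2*h"] h by simp
    have "norm w' * \<omega> (h * norm w') \<le> 2 * \<omega> (2 * h)"
    proof -
      have "norm w' * \<omega> (h * norm w') \<le> 2 * \<omega> (h * norm w')"
        using nw' om0 by (intro mult_right_mono) auto
      thus ?thesis using om1 by linarith
    qed
    hence qb: "q h w' \<le> p \<bullet> w' + e/2" using up pd Hw' om2 by fastforce
    have pw': "p \<bullet> w' \<le> p \<bullet> w + \<delta>0 * norm p"
    proof -
      have "- (p \<bullet> \<nu>) \<le> norm p" using Cauchy_Schwarz_ineq2[of p \<nu>] nu1 by (simp add: abs_le_iff)
      hence "\<delta>0 * (- (p \<bullet> \<nu>)) \<le> \<delta>0 * norm p" using d0 by (intro mult_left_mono) auto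
      thus ?thesis by (simp add: w'_def inner_diff_right)
    qed
    have lipy: "u y - u (x + h *\<^sub>R w') \<le> L * (h * \<delta>0)"
    proof -
      have "dist (u y) (u (x + h *\<^sub>R w')) \<le> L * dist y (x + h *\<^sub>R w')"
        using lipschitz_onD[OF lip y(1) inS'] .
      moreover have "y - (x + h *\<^sub>R w') = (h * \<delta>0) *\<^sub>R \<nu>"
        unfolding yw w'_def by (simp add: algebra_simps)
      hence "dist y (x + h *\<^sub>R w') = h * \<delta>0" using h d0 nu1 by (simp add: dist_norm)
      ultimately show ?thesis by (simp add: dist_real_def)
    qed
    have qq: "u (x + h *\<^sub>R w') - u x = h * q h w'" using h by (simp add: q_def)
    have pyx: "p \<bullet> (y - x) = h * (p \<bullet> w)" by (simp add: yw)
    have "u y - u x - p \<bullet> (y - x) \<le> L * (h * \<delta>0) + h * (p \<bullet> w + \<delta>0 * norm p + e/2) - h * (p \<bullet> w)"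
    proof -
      have "h * q h w' \<le> h * (p \<bullet> w + \<delta>0 * norm p + e/2)"
        using qb pw' h by (intro mult_left_mono) auto
      thus ?thesis using lipy qq pyx by linarith
    qed
    also have "\<dots> = h * (\<delta>0 * (L + norm p)) + h * (e/2)" by (simp add: algebra_simps)
    also have "\<dots> \<le> h * (e/2) + h * (e/2)" using d0M h by (intro add_mono mult_left_mono) auto
    also have "\<dots> = e * norm (y - x)" by (simp add: h_def)
    finally show "u y - u x - p \<bullet> (y - x) \<le> e * norm (y - x)" .
  qed
qed

lemma osd: "one_sided_deriv u S x (- \<nu>) (d (- \<nu>))"
  unfolding one_sided_deriv_def tendsto_iff
proof (intro allI impI)
  fix e :: real assume e: "e > 0"
  have nn: "\<nu> \<bullet> (- \<nu>) < 0" using nunu by simp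
  obtain b where b: "b > 0" "\<And>h. 0 < h \<Longrightarrow> h < b \<Longrightarrow> \<bar>q h (- \<nu>) - d (- \<nu>)\<bar> < e/2"
    using dlim[OF nn, unfolded tendsto_iff, rule_format, of "e/2"] e
    unfolding eventually_at_right_field by (auto simp: dist_real_def)
  obtain r1 where r1: "r1 > 0" and cone: "\<forall>v. \<nu> \<bullet> v \<le> - 1 * norm v \<longrightarrow> norm v < r1 \<longrightarrow> x + v \<in> S"
    using cone_in[of 1] by auto
  have cnu: "\<nu> \<bullet> (- \<nu>) \<le> - 1 * norm (- \<nu>)" using nunu nu1 by simp
  define \<delta> where "\<delta> = min b (min r1 (e / (2 * (L + 1))))"
  have \<delta>: "\<delta> > 0" using b r1 e Lnn by (simp add: \<delta>_def add_pos_nonneg)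
  show "\<forall>\<^sub>F z in at (0, - \<nu>) within {(h, \<theta>'). 0 < h \<and> x + h *\<^sub>R \<theta>' \<in> S}.
          dist ((\<lambda>(h, \<theta>'). (u (x + h *\<^sub>R \<theta>') - u x) / h) z) (d (- \<nu>)) < e"
    unfolding eventually_at
  proof (intro exI[of _ \<delta>] conjI ballI impI)
    show "\<delta> > 0" by (rule \<delta>)
  next
    fix z assume zW: "z \<in> {(h, \<theta>'). 0 < h \<and> x + h *\<^sub>R \<theta>' \<in> S}"
      and zd: "z \<noteq> (0, - \<nu>) \<and> dist z (0, - \<nu>) < \<delta>"
    obtain h th where z: "z = (h, th)" by (cases z)
    have h: "0 < h" "x + h *\<^sub>R th \<in> S" using zW z by auto
    have hd: "h < \<delta>" using dist_fst_le[of z "(0, - \<nu>)"] zd z h by (simp add: dist_real_def)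
    have thd: "norm (th + \<nu>) < \<delta>" using dist_snd_le[of z "(0, - \<nu>)"] zd z by (simp add: dist_norm)
    have hr: "norm (h *\<^sub>R (- \<nu>)) < r1" using hd h nu1 by (simp add: \<delta>_def)
    have v: "\<nu> \<bullet> (h *\<^sub>R (- \<nu>)) \<le> - 1 * norm (h *\<^sub>R (- \<nu>))" using cone_scale[OF cnu, of h] h by simp
    have inS: "x + h *\<^sub>R (- \<nu>) \<in> S" using cone[rule_format, OF v hr] .
    have l1: "\<bar>q h th - q h (- \<nu>)\<bar> \<le> L * norm (th + \<nu>)"
      using lipq[OF h(2) inS h(1)] by simp
    have "L * norm (th + \<nu>) \<le> L * (e / (2 * (L + 1)))"
      using thd Lnn by (intro mult_left_mono) (auto simp: \<delta>_def)
    also have "\<dots> < e/2"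
    proof -
      have "L / (L + 1) < 1" using Lnn by simp
      hence "(e/2) * (L / (L + 1)) < (e/2) * 1" using e by (intro mult_strict_left_mono) auto
      thus ?thesis by (simp add: field_simps)
    qed
    finally have l2: "\<bar>q h th - q h (- \<nu>)\<bar> < e/2" using l1 by linarith
    have l3: "\<bar>q h (- \<nu>) - d (- \<nu>)\<bar> < e/2" using b(2)[OF h(1)] hd by (simp add: \<delta>_def)
    have "dist (q h th) (d (- \<nu>)) < e" using l2[unfolded abs_less_iff] l3[unfolded abs_less_iff] unfolding dist_real_def abs_less_iff by linarith
    thus "dist ((\<lambda>(h, \<theta>'). (u (x + h *\<^sub>R \<theta>') - u x) / h) z) (d (- \<nu>)) < e"
      by (simp add: z q_def)
  qed
qed

end


context bdry begin

lemma is_maxI: "m \<in> A \<Longrightarrow> (\<forall>a\<in>A. a \<le> m) \<Longrightarrow> is_max A m"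
  by (simp add: is_max_def)

lemma tang_nu: "(tangential \<nu> p + l *\<^sub>R \<nu>) \<bullet> \<nu> = l"
  using nunu by (simp add: tangential_def inner_add_left inner_diff_left)

lemma tang_self: "tangential \<nu> p + (p \<bullet> \<nu>) *\<^sub>R \<nu> = p"
  by (simp add: tangential_def)

lemma D_upper: "q' \<in> superdiff u S x \<Longrightarrow> q' \<bullet> \<nu> \<le> - d (- \<nu>)"
  using dsup[of q' "- \<nu>"] nunu by simp

lemma lam_max:
  assumes p: "p \<in> superdiff u S x"
  shows "is_max {l. tangential \<nu> p + l *\<^sub>R \<nu> \<in> superdiff u S x}
           (Sup {l. tangential \<nu> p + l *\<^sub>R \<nu> \<in> superdiff u S x})"
    and "Sup {l. tangential \<nu> p + l *\<^sub>R \<nu> \<in> superdiff u S x} \<le> - d (- \<nu>)"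
proof -
  define Sp where "Sp = {l. tangential \<nu> p + l *\<^sub>R \<nu> \<in> superdiff u S x}"
  define m where "m = Sup Sp"
  have ne: "p \<bullet> \<nu> \<in> Sp" using p tang_self[of p] by (simp add: Sp_def)
  hence ne': "Sp \<noteq> {}" by blast
  have ub: "l \<le> - d (- \<nu>)" if "l \<in> Sp" for l
    using D_upper[of "tangential \<nu> p + l *\<^sub>R \<nu>"] that tang_nu by (simp add: Sp_def)
  have bdd: "bdd_above Sp" unfolding bdd_above_def using ub by blast
  have upper: "a \<le> m" if "a \<in> Sp" for a using cSup_upper[OF that bdd] by (simp add: m_def)
  have mS: "m \<in> Sp"
    unfolding Sp_def superdiff_def
  proof (intro CollectI allI impI)
    fix e :: real assume e: "e > 0"
    have "m - e/2 < m" using e by simp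
    then obtain l where l: "l \<in> Sp" "m - e/2 < l" using less_cSup_iff[OF ne' bdd] by (auto simp: m_def)
    have lm: "l \<le> m" using upper l by blast
    obtain \<delta> where \<delta>: "\<delta> > 0" "\<And>y. y \<in> S \<Longrightarrow> 0 < norm (y - x) \<Longrightarrow> norm (y - x) < \<delta> \<Longrightarrow>
        u y - u x - (tangential \<nu> p + l *\<^sub>R \<nu>) \<bullet> (y - x) \<le> (e/2) * norm (y - x)"
    proof -
      have mem: "\<forall>e>0. \<exists>d>0. \<forall>y\<in>S. 0 < norm (y - x) \<longrightarrow> norm (y - x) < d \<longrightarrow>
        u y - u x - (tangential \<nu> p + l *\<^sub>R \<nu>) \<bullet> (y - x) \<le> e * norm (y - x)"
        using l(1) unfolding Sp_def superdiff_def by simp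
      from mem[rule_format, OF half_gt_zero[OF e]] obtain \<delta> where "\<delta> > 0" "\<forall>y\<in>S. 0 < norm (y - x) \<longrightarrow> norm (y - x) < \<delta> \<longrightarrow>
        u y - u x - (tangential \<nu> p + l *\<^sub>R \<nu>) \<bullet> (y - x) \<le> (e/2) * norm (y - x)" by blast
      thus ?thesis using that by blast
    qed
    show "\<exists>d>0. \<forall>y\<in>S. 0 < norm (y - x) \<longrightarrow> norm (y - x) < d \<longrightarrow>
            u y - u x - (tangential \<nu> p + m *\<^sub>R \<nu>) \<bullet> (y - x) \<le> e * norm (y - x)"
    proof (intro exI[of _ \<delta>] conjI ballI impI)
      show "\<delta> > 0" by (rule \<delta>)
    next
      fix y assume y: "y \<in> S" "0 < norm (y - x)" "norm (y - x) < \<delta>"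
      have "(tangential \<nu> p + m *\<^sub>R \<nu>) \<bullet> (y - x)
            = (tangential \<nu> p + l *\<^sub>R \<nu>) \<bullet> (y - x) + (m - l) * (\<nu> \<bullet> (y - x))"
        by (simp add: inner_add_left algebra_simps)
      moreover have "- (\<nu> \<bullet> (y - x)) \<le> norm (y - x)"
        using Cauchy_Schwarz_ineq2[of \<nu> "y - x"] nu1 by (simp add: abs_le_iff)
      hence "(m - l) * (- (\<nu> \<bullet> (y - x))) \<le> (e/2) * norm (y - x)"
      proof -
        assume a: "- (\<nu> \<bullet> (y - x)) \<le> norm (y - x)"
        have "(m - l) * (- (\<nu> \<bullet> (y - x))) \<le> (m - l) * norm (y - x)"
          using a lm by (intro mult_left_mono) auto
        also have "\<dots> \<le> (e/2) * norm (y - x)" using l lm by (intro mult_right_mono) auto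
        finally show ?thesis .
      qed
      moreover have "u y - u x - (tangential \<nu> p + l *\<^sub>R \<nu>) \<bullet> (y - x) \<le> (e/2) * norm (y - x)"
        using \<delta>(2) y by blast
      ultimately show "u y - u x - (tangential \<nu> p + m *\<^sub>R \<nu>) \<bullet> (y - x) \<le> e * norm (y - x)"
        by (simp add: algebra_simps)
    qed
  qed
  show "is_max {l. tangential \<nu> p + l *\<^sub>R \<nu> \<in> superdiff u S x}
           (Sup {l. tangential \<nu> p + l *\<^sub>R \<nu> \<in> superdiff u S x})"
    using mS upper unfolding is_max_def Sp_def m_def by blast
  show "Sup {l. tangential \<nu> p + l *\<^sub>R \<nu> \<in> superdiff u S x} \<le> - d (- \<nu>)"
    using ub mS unfolding Sp_def m_def by blast
qed

lemma main_conclusion: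
  shows "(\<forall>p\<in>superdiff u S x.
            \<exists>lp. is_max {l. tangential \<nu> p + l *\<^sub>R \<nu> \<in> superdiff u S x} lp)
       \<and> (\<exists>\<Lambda>. is_max {lp. \<exists>p\<in>superdiff u S x.
                  is_max {l. tangential \<nu> p + l *\<^sub>R \<nu> \<in> superdiff u S x} lp} \<Lambda>
              \<and> one_sided_deriv u S x (- \<nu>) (- \<Lambda>))"
proof (intro conjI ballI)
  fix p assume "p \<in> superdiff u S x"
  thus "\<exists>lp. is_max {l. tangential \<nu> p + l *\<^sub>R \<nu> \<in> superdiff u S x} lp"
    using lam_max(1) by blast
next
  obtain ps where ps: "\<forall>w. \<nu> \<bullet> w < 0 \<longrightarrow> d w \<le> ps \<bullet> w" "d (- \<nu>) = ps \<bullet> (- \<nu>)"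
    using supgrad by blast
  have psD: "ps \<in> superdiff u S x" using psuper ps(1) by blast
  define Sps where "Sps = {l. tangential \<nu> ps + l *\<^sub>R \<nu> \<in> superdiff u S x}"
  have mx: "is_max Sps (Sup Sps)" "Sup Sps \<le> - d (- \<nu>)"
    using lam_max[OF psD] unfolding Sps_def by auto
  have "ps \<bullet> \<nu> \<in> Sps" using psD tang_self[of ps] by (simp add: Sps_def)
  hence "ps \<bullet> \<nu> \<le> Sup Sps" using mx(1) unfolding is_max_def by blast
  moreover have "ps \<bullet> \<nu> = - d (- \<nu>)" using ps(2) by simp
  ultimately have eqL: "Sup Sps = - d (- \<nu>)" using mx(2) by linarith
  show "\<exists>\<Lambda>. is_max {lp. \<exists>p\<in>superdiff u S x.
                  is_max {l. tangential \<nu> p + l *\<^sub>R \<nu> \<in> superdiff u S x} lp} \<Lambda>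
              \<and> one_sided_deriv u S x (- \<nu>) (- \<Lambda>)"
  proof -
    have osd': "one_sided_deriv u S x (- \<nu>) (- (- d (- \<nu>)))" using osd by simp
    have im: "is_max {lp. \<exists>p\<in>superdiff u S x.
                  is_max {l. tangential \<nu> p + l *\<^sub>R \<nu> \<in> superdiff u S x} lp} (- d (- \<nu>))"
    proof (rule is_maxI)
      show "- d (- \<nu>) \<in> {lp. \<exists>p\<in>superdiff u S x.
                  is_max {l. tangential \<nu> p + l *\<^sub>R \<nu> \<in> superdiff u S x} lp}"
        using psD mx(1) eqL unfolding Sps_def by auto
    next
      show "\<forall>a \<in> {lp. \<exists>p\<in>superdiff u S x.
                  is_max {l. tangential \<nu> p + l *\<^sub>R \<nu> \<in> superdiff u S x} lp}. a \<le> - d (- \<nu>)"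
      proof
      fix a assume "a \<in> {lp. \<exists>p\<in>superdiff u S x.
                  is_max {l. tangential \<nu> p + l *\<^sub>R \<nu> \<in> superdiff u S x} lp}"
      then obtain p where p: "p \<in> superdiff u S x"
        and a: "is_max {l. tangential \<nu> p + l *\<^sub>R \<nu> \<in> superdiff u S x} a" by blast
      have "tangential \<nu> p + a *\<^sub>R \<nu> \<in> superdiff u S x" using a unfolding is_max_def by blast
      from D_upper[OF this] show "a \<le> - d (- \<nu>)" using tang_nu[of p a] by simp
      qed
    qed
    show ?thesis by (intro exI[of _ "- d (- \<nu>)"] conjI im osd')
  qed
qed

end

lemma closure_rho:
  assumes U: "open U" and der: "\<forall>y\<in>U. (\<rho> has_derivative (\<lambda>h. g y \<bullet> h)) (at y)"
    and eq: "\<Omega> \<inter> U = {y\<in>U. \<rho> y < 0}"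
    and y: "y \<in> closure \<Omega>" "y \<in> U"
  shows "\<rho> y \<le> (0::real)"
proof (rule ccontr)
  assume "\<not> \<rho> y \<le> 0"
  hence pos: "\<rho> y > 0" by simp
  have "isCont \<rho> y" using der y(2) has_derivative_continuous by blast
  then obtain \<delta>1 where \<delta>1: "\<delta>1 > 0" "\<And>z. dist z y < \<delta>1 \<Longrightarrow> dist (\<rho> z) (\<rho> y) < \<rho> y"
    using pos unfolding continuous_at_eps_delta by blast
  obtain \<delta>2 where \<delta>2: "\<delta>2 > 0" "ball y \<delta>2 \<subseteq> U" using U y(2) open_contains_ball by blast
  obtain z where z: "z \<in> \<Omega>" "dist z y < min \<delta>1 \<delta>2"
  proof -
    have "min \<delta>1 \<delta>2 > 0" using \<delta>1 \<delta>2 by simp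
    thus ?thesis using y(1) that unfolding closure_approachable by blast
  qed
  have "z \<in> U" using \<delta>2 z by (auto simp: dist_commute)
  hence "\<rho> z < 0" using eq z by blast
  moreover have "dist (\<rho> z) (\<rho> y) < \<rho> y" using \<delta>1 z by simp
  ultimately show False by (simp add: dist_real_def)
qed

theorem proposition2p13:
  fixes \<Omega> :: "'a::euclidean_space set" and u :: "'a \<Rightarrow> real" and \<omega> :: "real \<Rightarrow> real"
    and x \<nu> :: 'a and L :: real
  assumes "bounded \<Omega>" and "open \<Omega>" and "C2_boundary \<Omega>"
    and "x \<in> frontier \<Omega>" and "outward_unit_normal \<Omega> x \<nu>"
    and "L-lipschitz_on (closure \<Omega>) u"
    and "modulus \<omega>" and "semiconcave_with_modulus u \<omega> (closure \<Omega>)"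
  shows "(\<forall>p\<in>superdiff u (closure \<Omega>) x.
            \<exists>lp. is_max {l. tangential \<nu> p + l *\<^sub>R \<nu> \<in> superdiff u (closure \<Omega>) x} lp)
       \<and> (\<exists>\<Lambda>. is_max {lp. \<exists>p\<in>superdiff u (closure \<Omega>) x.
                  is_max {l. tangential \<nu> p + l *\<^sub>R \<nu> \<in> superdiff u (closure \<Omega>) x} lp} \<Lambda>
              \<and> one_sided_deriv u (closure \<Omega>) x (- \<nu>) (- \<Lambda>))"
proof -
  obtain U \<rho> g where LC: "local_C2_defining_fn \<Omega> x U \<rho> g"
      and nu: "\<nu> = (1 / norm (g x)) *\<^sub>R g x"
    using assms(5) unfolding outward_unit_normal_def by blast
  have U: "open U" "x \<in> U" and der: "\<forall>y\<in>U. (\<rho> has_derivative (\<lambda>h. g y \<bullet> h)) (at y)"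
    and gnz: "\<forall>y\<in>U. g y \<noteq> 0" and eq: "\<Omega> \<inter> U = {y\<in>U. \<rho> y < 0}"
    using LC unfolding local_C2_defining_fn_def by blast+
  define k where "k = norm (g x)"
  have k: "k > 0" using gnz U by (simp add: k_def)
  have gx: "g x = k *\<^sub>R \<nu>" using k by (simp add: nu k_def)
  have nu1: "norm \<nu> = 1" using k by (simp add: nu k_def)
  have xcl: "x \<in> closure \<Omega>" and xnot: "x \<notin> \<Omega>"
    using assms(4) interior_open[OF assms(2)] unfolding frontier_def by auto
  have le: "\<rho> x \<le> 0" using closure_rho[OF U(1) der eq xcl U(2)] .
  have ge: "\<rho> x \<ge> 0"
  proof (rule ccontr)
    assume "\<not> \<rho> x \<ge> 0"
    hence "x \<in> \<Omega> \<inter> U" using eq U by auto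
    thus False using xnot by blast
  qed
  obtain r where r: "r > 0" "ball x r \<subseteq> U" using U open_contains_ball by blast
  have inU: "y \<in> U" if "norm (y - x) < r" for y
    using r that by (auto simp: dist_norm norm_minus_commute)
  interpret B: bdry "closure \<Omega>" u x \<nu> \<rho> k L \<omega>
  proof
    show "x \<in> closure \<Omega>" by (rule xcl)
    show "norm \<nu> = 1" by (rule nu1)
    show "k > 0" by (rule k)
    show "\<rho> x = 0" using le ge by simp
    show "(\<rho> has_derivative (\<lambda>h. (k *\<^sub>R \<nu>) \<bullet> h)) (at x)" using bspec[OF der U(2)] by (simp add: gx)
    show "\<exists>r>0. \<forall>y. norm (y - x) < r \<longrightarrow> \<rho> y < 0 \<longrightarrow> y \<in> closure \<Omega>"
    proof (intro exI[of _ r] conjI allI impI)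
      fix y assume "norm (y - x) < r" "\<rho> y < 0"
      hence "y \<in> \<Omega> \<inter> U" using inU eq by blast
      thus "y \<in> closure \<Omega>" using closure_subset by blast
    qed (use r in auto)
    show "\<exists>r>0. \<forall>y\<in>closure \<Omega>. norm (y - x) < r \<longrightarrow> \<rho> y \<le> 0"
    proof (intro exI[of _ r] conjI ballI impI)
      fix y assume "y \<in> closure \<Omega>" "norm (y - x) < r"
      thus "\<rho> y \<le> 0" using inU closure_rho[OF U(1) der eq] by blast
    qed (use r in auto)
    show "L-lipschitz_on (closure \<Omega>) u" by (rule assms(6))
    show "modulus \<omega>" by (rule assms(7))
    show "semiconcave_with_modulus u \<omega> (closure \<Omega>)" by (rule assms(8))
  qed
  show ?thesis by (rule B.main_conclusion)
qed


end
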